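(* Fix $J=(J_1,J_2)\in\mathbb{R}^2$ and let $S(J)=\{m\in\{1,2,3,4\}: U_m(J)=\min\{U_1(J),U_2(J),U_3(J),U_4(J)\}\}$ and $\mathcal{C}_{S(J)}=\bigcup_{m\in S(J)}\mathcal{C}_m$. Suppose that for every unit ball $b$, every configuration $\sigma_b$ on $b$ belonging to $\mathcal{C}_{S(J)}$, and every unit ball $b'$ neighbouring $b$, there exists exactly one configuration $\sigma'_{b'}$ on $b'$ belonging to $\mathcal{C}_{S(J)}$ that is compatible with $\sigma_b$. Then the relative Hamiltonian $H$ satisfies the Peierls condition.
   Context: Let $G_2$ be the free product of three cyclic groups of order two with generators $a_1,a_2,a_3$; its elements are the vertices $V$ of the Cayley tree $\Gamma^2$ of order 2, where $g,h$ are nearest neighbours (an edge $\langle g,h\rangle$) iff $h=ga_i$ for some $i$; every vertex has 3 neighbours. $d$ is the graph distance. Configurations are maps $\sigma:V\to\{-1,1\}$. A configuration is periodic if there is a subgroup $G^*\subset G_2$ of finite index with $\sigma(gh)=\sigma(h)$ for all $g\in G^*$, $h\in G_2$; it has period not exceeding 2 if such a subgroup of index at most 2 exists. A unit ball is $b=\{y: d(x,y)\le1\}$ for some $x\in V$ (its center $x$ and three leaves); $M$ is the set of unit balls, and $\sigma_b$ is the restriction of $\sigma$ to $b$. Two distinct unit balls are neighbours if they have a common edge; configurations $\sigma_b$, $\sigma'_{b'}$ on neighbouring balls are compatible if they coincide on the endpoints of the common edge. Classes: a configuration on a unit ball belongs to $\mathcal{C}_1$, $\mathcal{C}_2$, $\mathcal{C}_4$,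 $\mathcal{C}_3$ according as exactly $3$, $2$, $1$, $0$ of its leaves carry the same value as its center. The energy of a ball is $U(\sigma_b)=\tfrac12J_1\sum_{\langle x,y\rangle:\,x,y\in b}\sigma(x)\sigma(y)+J_2\sum_{\{x,y\}\subset b:\,d(x,y)=2}\sigma(x)\sigma(y)$ (sums over unordered pairs); it equals $U_1=\tfrac32J_1+3J_2$, $U_2=\tfrac12J_1-J_2$, $U_3=-\tfrac32J_1+3J_2$, $U_4=-\tfrac12J_1-J_2$ on $\mathcal{C}_1,\dots,\mathcal{C}_4$ respectively. For $\sigma,\varphi$ differing at finitely many vertices, the relative Hamiltonian is $H(\sigma,\varphi)=J_1\sum_{\langle x,y\rangle}(\sigma(x)\sigma(y)-\varphi(x)\varphi(y))+J_2\sum_{\{x,y\}:\,d(x,y)=2}(\sigma(x)\sigma(y)-\varphi(x)\varphi(y))$ (unordered pairs). A ground state is a periodic configuration $a$ with $U(a_b)=\min\{U_1,U_2,U_3,U_4\}$ for every $b\in M$. For $x\in V$ let $V_2(x)=\{y: d(x,y)\le2\}$. If the set of all ground states is finite, $\{\sigma^1,\dots,\sigma^q\}$, and each has period not exceeding 2, then for a configuration $\sigma$ the ball $V_2(x)$ is improper if $\sigma|_{V_2(x)}\ne\sigma^j|_{V_2(x)}$ for all $j=1,\dots,q$; the boundary $\partial(\sigma)$ is the union of the improper balls of $\sigma$, and $|\partial(\sigma)|$ is the number of unit balls in $\partial(\sigma)$. $H$ satisfies the Peierls condition if the set of ground states is finite, $\{\sigma^1,\dots,\sigma^q\}$, each of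 period not exceeding 2, and there is a constant $\lambda>0$ such that for every $j$ and every configuration $\sigma$ coinciding with $\sigma^j$ at all but finitely many vertices, $H(\sigma,\sigma^j)\ge\lambda|\partial(\sigma)|$. *)

theory Defs
  imports Complex_Main "HOL-Algebra.Coset"
begin

section \<open>The group G_2: free product of three copies of Z/2\<close>

text \<open>Elements are reduced words over the letters 0,1,2 (letter i stands for a_(i+1)):
  no two consecutive letters are equal.\<close>

definition reduced :: "nat list \<Rightarrow> bool" where
  "reduced w \<longleftrightarrow> set w \<subseteq> {0,1,2} \<and> (\<forall>i. Suc i < length w \<longrightarrow> w ! i \<noteq> w ! Suc i)"

typedef G2 = "{w :: nat list. reduced w}"
  by (rule exI[of _ "[]"]) (simp add: reduced_def)

fun red_app :: "nat list \<Rightarrow> nat list \<Rightarrow> nat list" where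
  "red_app u [] = u"
| "red_app u (a # v) =
     (if u \<noteq> [] \<and> last u = a then red_app (butlast u) v else red_app (u @ [a]) v)"

definition g2_mult :: "G2 \<Rightarrow> G2 \<Rightarrow> G2" where
  "g2_mult x y = Abs_G2 (red_app (Rep_G2 x) (Rep_G2 y))"

definition g2_one :: G2 where
  "g2_one = Abs_G2 []"

definition gen :: "nat \<Rightarrow> G2" where
  "gen i = Abs_G2 [i]"

definition G2grp :: "G2 monoid" where
  "G2grp = \<lparr>carrier = UNIV, mult = g2_mult, one = g2_one\<rparr>"

section \<open>Cayley tree of order 2\<close>

definition adj :: "G2 \<Rightarrow> G2 \<Rightarrow> bool" where
  "adj g h \<longleftrightarrow> (\<exists>i<3. h = g2_mult g (gen i))"

definition gdist :: "G2 \<Rightarrow> G2 \<Rightarrow> nat" where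
  "gdist x y = (LEAST n. (adj ^^ n) x y)"

definition ball1 :: "G2 \<Rightarrow> G2 set" where
  "ball1 x = {y. gdist x y \<le> 1}"

definition ball2 :: "G2 \<Rightarrow> G2 set" where
  "ball2 x = {y. gdist x y \<le> 2}"

definition is_config :: "(G2 \<Rightarrow> int) \<Rightarrow> bool" where
  "is_config \<sigma> \<longleftrightarrow> (\<forall>x. \<sigma> x \<in> {-1, 1})"

definition confs_on :: "G2 set \<Rightarrow> (G2 \<Rightarrow> int) set" where
  "confs_on b = {f. (\<forall>u\<in>b. f u \<in> {-1, 1}) \<and> (\<forall>u. u \<notin> b \<longrightarrow> f u = 0)}"

definition periodic_idx :: "nat option \<Rightarrow> (G2 \<Rightarrow> int) \<Rightarrow> bool" where
  "periodic_idx bnd \<sigma> \<longleftrightarrow>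
     (\<exists>H. subgroup H G2grp \<and> finite (rcosets\<^bsub>G2grp\<^esub> H)
          \<and> (case bnd of None \<Rightarrow> True | Some k \<Rightarrow> card (rcosets\<^bsub>G2grp\<^esub> H) \<le> k)
          \<and> (\<forall>g\<in>H. \<forall>h. \<sigma> (g2_mult g h) = \<sigma> h))"

definition periodic :: "(G2 \<Rightarrow> int) \<Rightarrow> bool" where
  "periodic \<sigma> \<longleftrightarrow> periodic_idx None \<sigma>"

definition period_le2 :: "(G2 \<Rightarrow> int) \<Rightarrow> bool" where
  "period_le2 \<sigma> \<longleftrightarrow> periodic_idx (Some 2) \<sigma>"

definition same_leaves :: "G2 \<Rightarrow> (G2 \<Rightarrow> int) \<Rightarrow> nat" where
  "same_leaves x f = card {u \<in> ball1 x - {x}. f u = f x}"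

text \<open>class index m such that f restricted to ball1 x lies in C_m\<close>
definition ball_class :: "G2 \<Rightarrow> (G2 \<Rightarrow> int) \<Rightarrow> nat" where
  "ball_class x f = (if same_leaves x f = 3 then 1
     else if same_leaves x f = 2 then 2
     else if same_leaves x f = 1 then 4 else 3)"

definition ball_energy :: "real \<Rightarrow> real \<Rightarrow> (G2 \<Rightarrow> int) \<Rightarrow> G2 \<Rightarrow> real" where
  "ball_energy J1 J2 \<sigma> x =
     J1 / 2 * ((1/2) * (\<Sum>p\<in>{(u,v). u \<in> ball1 x \<and> v \<in> ball1 x \<and> adj u v}.
                           of_int (\<sigma> (fst p) * \<sigma> (snd p))))
   + J2 * ((1/2) * (\<Sum>p\<in>{(u,v). u \<in> ball1 x \<and> v \<in> ball1 x \<and> gdist u v = 2}.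
                           of_int (\<sigma> (fst p) * \<sigma> (snd p))))"

definition Uval :: "real \<Rightarrow> real \<Rightarrow> nat \<Rightarrow> real" where
  "Uval J1 J2 m = (if m = 1 then 3/2 * J1 + 3 * J2
                   else if m = 2 then 1/2 * J1 - J2
                   else if m = 3 then -3/2 * J1 + 3 * J2
                   else -1/2 * J1 - J2)"

definition Umin :: "real \<Rightarrow> real \<Rightarrow> real" where
  "Umin J1 J2 = Min (Uval J1 J2 ` {1,2,3,4})"

definition Sset :: "real \<Rightarrow> real \<Rightarrow> nat set" where
  "Sset J1 J2 = {m \<in> {1,2,3,4}. Uval J1 J2 m = Umin J1 J2}"

text \<open>relative Hamiltonian; sums over unordered pairs written as half the sums over
  ordered pairs, restricted to the (finitely many) pairs with non-zero contribution\<close>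
definition relH :: "real \<Rightarrow> real \<Rightarrow> (G2 \<Rightarrow> int) \<Rightarrow> (G2 \<Rightarrow> int) \<Rightarrow> real" where
  "relH J1 J2 \<sigma> \<phi> =
     J1 * ((1/2) * (\<Sum>p\<in>{(x,y). adj x y \<and> \<sigma> x * \<sigma> y \<noteq> \<phi> x * \<phi> y}.
                 of_int (\<sigma> (fst p) * \<sigma> (snd p) - \<phi> (fst p) * \<phi> (snd p))))
   + J2 * ((1/2) * (\<Sum>p\<in>{(x,y). gdist x y = 2 \<and> \<sigma> x * \<sigma> y \<noteq> \<phi> x * \<phi> y}.
                 of_int (\<sigma> (fst p) * \<sigma> (snd p) - \<phi> (fst p) * \<phi> (snd p))))"

definition ground_state :: "real \<Rightarrow> real \<Rightarrow> (G2 \<Rightarrow> int) \<Rightarrow> bool" where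
  "ground_state J1 J2 a \<longleftrightarrow> is_config a \<and> periodic a \<and>
     (\<forall>x. ball_energy J1 J2 a x = Umin J1 J2)"

definition GS :: "real \<Rightarrow> real \<Rightarrow> (G2 \<Rightarrow> int) set" where
  "GS J1 J2 = {a. ground_state J1 J2 a}"

definition improper :: "real \<Rightarrow> real \<Rightarrow> (G2 \<Rightarrow> int) \<Rightarrow> G2 \<Rightarrow> bool" where
  "improper J1 J2 \<sigma> x \<longleftrightarrow> (\<forall>\<tau>\<in>GS J1 J2. \<not> (\<forall>y\<in>ball2 x. \<sigma> y = \<tau> y))"

definition boundary :: "real \<Rightarrow> real \<Rightarrow> (G2 \<Rightarrow> int) \<Rightarrow> G2 set" where
  "boundary J1 J2 \<sigma> = \<Union> {ball2 x | x. improper J1 J2 \<sigma> x}"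

definition boundary_size :: "real \<Rightarrow> real \<Rightarrow> (G2 \<Rightarrow> int) \<Rightarrow> nat" where
  "boundary_size J1 J2 \<sigma> = card {x. ball1 x \<subseteq> boundary J1 J2 \<sigma>}"

definition peierls :: "real \<Rightarrow> real \<Rightarrow> bool" where
  "peierls J1 J2 \<longleftrightarrow> finite (GS J1 J2) \<and> (\<forall>\<tau>\<in>GS J1 J2. period_le2 \<tau>) \<and>
     (\<exists>lam>0. \<forall>\<tau>\<in>GS J1 J2. \<forall>\<sigma>. is_config \<sigma> \<and> finite {x. \<sigma> x \<noteq> \<tau> x} \<longrightarrow>
        relH J1 J2 \<sigma> \<tau> \<ge> lam * real (boundary_size J1 J2 \<sigma>))"

definition nbr_balls :: "G2 set \<Rightarrow> G2 set \<Rightarrow> bool" where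
  "nbr_balls b b' \<longleftrightarrow> b \<noteq> b' \<and> (\<exists>u v. u \<in> b \<and> v \<in> b \<and> u \<in> b' \<and> v \<in> b' \<and> adj u v)"

definition compatible :: "G2 set \<Rightarrow> G2 set \<Rightarrow> (G2 \<Rightarrow> int) \<Rightarrow> (G2 \<Rightarrow> int) \<Rightarrow> bool" where
  "compatible b b' f g \<longleftrightarrow>
     (\<forall>u v. u \<in> b \<and> v \<in> b \<and> u \<in> b' \<and> v \<in> b' \<and> adj u v \<longrightarrow> f u = g u \<and> f v = g v)"

end

theory Submission
  imports Defs
begin

notation g2_mult (infixl "\<star>" 70)

definition step :: "nat list \<Rightarrow> nat \<Rightarrow> nat list" where
  "step u a = (if u \<noteq> [] \<and> last u = a then butlast u else u @ [a])"

lemma red_app_Cons: "red_app u (a # v) = red_app (step u a) v"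
  by (simp add: step_def)

declare red_app.simps(2)[simp del]

lemma red_app_append: "red_app u (v @ w) = red_app (red_app u v) w"
  by (induction v arbitrary: u) (auto simp: red_app_Cons)

lemma red_app_snoc: "red_app u (v @ [a]) = step (red_app u v) a"
  by (simp add: red_app_append red_app_Cons)

lemma reduced_alt: "reduced w \<longleftrightarrow> set w \<subseteq> {0,1,2} \<and> successively (\<noteq>) w"
  by (simp add: reduced_def successively_conv_nth)

lemma reduced_Nil[simp]: "reduced []"
  by (simp add: reduced_alt)

lemma reduced_snoc: "reduced (u @ [a]) \<longleftrightarrow> reduced u \<and> a \<in> {0,1,2} \<and> (u \<noteq> [] \<longrightarrow> last u \<noteq> a)"
  by (auto simp: reduced_alt successively_append_iff)

lemma reduced_butlast: "reduced u \<Longrightarrow> reduced (butlast u)"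
  by (metis append_butlast_last_id butlast.simps(1) reduced_snoc)

lemma reduced_rev: "reduced (rev u) \<longleftrightarrow> reduced u"
proof -
  have "successively (\<lambda>x y::nat. y \<noteq> x) u = successively (\<noteq>) u"
    by (rule successively_cong) auto
  then show ?thesis by (simp add: reduced_alt)
qed

lemma reduced_set: "reduced w \<Longrightarrow> set w \<subseteq> {0,1,2}"
  by (simp add: reduced_alt)

lemma reduced_step: "reduced u \<Longrightarrow> a \<in> {0,1,2} \<Longrightarrow> reduced (step u a)"
  by (auto simp: step_def reduced_butlast reduced_snoc)

lemma step_step: "reduced u \<Longrightarrow> step (step u a) a = u"
proof (cases "u \<noteq> [] \<and> last u = a")
  case True
  assume r: "reduced u"
  obtain b where b: "u = b @ [a]" using True by (metis append_butlast_last_id)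
  have "b \<noteq> [] \<longrightarrow> last b \<noteq> a" using r b reduced_snoc by blast
  then show ?thesis using b by (auto simp: step_def)
next
  case False
  then show ?thesis unfolding step_def by auto
qed

lemma reduced_red_app: "reduced u \<Longrightarrow> set v \<subseteq> {0,1,2} \<Longrightarrow> reduced (red_app u v)"
  by (induction v arbitrary: u) (auto simp: red_app_Cons reduced_step)

lemma red_app_Nil_reduced: "reduced v \<Longrightarrow> red_app [] v = v"
proof (induction v rule: rev_induct)
  case (snoc a v)
  then show ?case by (auto simp: red_app_snoc reduced_snoc step_def)
qed simp

lemma red_app_step: "reduced u \<Longrightarrow> reduced v \<Longrightarrow> a \<in> {0,1,2} \<Longrightarrow>
   red_app u (step v a) = step (red_app u v) a"
proof (cases "v \<noteq> [] \<and> last v = a")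
  case True
  assume u: "reduced u" and v: "reduced v" and a: "a \<in> {0,1,2}"
  then obtain v' where v': "v = v' @ [a]" using True
    by (metis append_butlast_last_id)
  have rv': "reduced v'" using v v' reduced_snoc by auto
  have "step (red_app u v) a = step (step (red_app u v') a) a" by (simp add: v' red_app_snoc)
  also have "\<dots> = red_app u v'"
    by (rule step_step[OF reduced_red_app[OF u reduced_set[OF rv']]])
  finally show ?thesis using True v' by (simp add: step_def)
next
  case False
  then have "step v a = v @ [a]" unfolding step_def by auto
  then show ?thesis using False by (simp add: red_app_snoc)
qed

lemma red_app_assoc_gen: "reduced u \<Longrightarrow> reduced v \<Longrightarrow> set w \<subseteq> {0,1,2} \<Longrightarrow>
  red_app u (red_app v w) = red_app (red_app u v) w"
proof (induction w arbitrary: v)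
  case Nil then show ?case by simp
next
  case (Cons a w)
  have "red_app u (red_app v (a # w)) = red_app u (red_app (step v a) w)"
    by (simp add: red_app_Cons)
  have a: "a \<in> {0,1,2}" and w: "set w \<subseteq> {0,1,2}" using Cons.prems(3) by auto
  have rs: "reduced (step v a)" using Cons.prems(2) a by (rule reduced_step)
  note \<open>red_app u (red_app v (a # w)) = red_app u (red_app (step v a) w)\<close>
  also have "red_app u (red_app (step v a) w) = red_app (red_app u (step v a)) w"
    by (rule Cons.IH[OF Cons.prems(1) rs w])
  also have "red_app u (step v a) = step (red_app u v) a"
    by (rule red_app_step[OF Cons.prems(1) Cons.prems(2) a])
  finally show ?case by (simp add: red_app_Cons)
qed

lemma red_app_rev: "reduced u \<Longrightarrow> red_app u (rev u) = []"
proof (induction u rule: rev_induct)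
  case (snoc a u)
  then have "reduced u" "a \<in> {0,1,2}" "u \<noteq> [] \<longrightarrow> last u \<noteq> a" by (auto simp: reduced_snoc)
  then show ?case using snoc by (simp add: red_app_Cons step_def)
qed simp

lemma length_step: "length (step u a) = (if u \<noteq> [] \<and> last u = a then length u - 1 else length u + 1)"
  by (simp add: step_def)

lemma length_step_le: "length (step u a) \<le> Suc (length u)"
  by (auto simp: length_step)

lemma length_red_app_le: "length (red_app u v) \<le> length u + length v"
proof (induction v arbitrary: u)
  case (Cons a v)
  have "length (red_app (step u a) v) \<le> length (step u a) + length v" by (rule Cons.IH)
  also have "\<dots> \<le> Suc (length u) + length v" using length_step_le by simp
  finally show ?case by (simp add: red_app_Cons)
qed simp

lemma parity_red_app: "even (length (red_app u v)) \<longleftrightarrow> even (length u + length v)"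
proof (induction v arbitrary: u)
  case (Cons a v)
  have "even (length (step u a)) \<longleftrightarrow> even (Suc (length u))"
  proof (cases "u \<noteq> [] \<and> last u = a")
    case True
    then obtain k where "length u = Suc k" by (cases u) auto
    then show ?thesis using True by (simp add: length_step)
  qed (simp add: length_step)
  then show ?case by (simp add: red_app_Cons Cons.IH) blast
qed simp

lemma Rep_reduced: "reduced (Rep_G2 x)"
  using Rep_G2 by simp

lemma Rep_mult: "Rep_G2 (x \<star> y) = red_app (Rep_G2 x) (Rep_G2 y)"
  unfolding g2_mult_def
  by (rule Abs_G2_inverse) (simp add: reduced_red_app[OF Rep_reduced reduced_set[OF Rep_reduced]])

lemma Rep_one: "Rep_G2 g2_one = []"
  unfolding g2_one_def by (simp add: Abs_G2_inverse)

lemma Rep_gen: "i < 3 \<Longrightarrow> Rep_G2 (gen i) = [i]"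
  unfolding gen_def by (rule Abs_G2_inverse) (auto simp: reduced_def)

lemma mult_assoc: "x \<star> y \<star> z = x \<star> (y \<star> z)"
  by (metis Rep_G2_inject Rep_mult Rep_reduced red_app_assoc_gen reduced_alt)

lemma one_left[simp]: "g2_one \<star> x = x"
  by (metis Rep_G2_inject Rep_mult Rep_one Rep_reduced red_app_Nil_reduced)

lemma one_right[simp]: "x \<star> g2_one = x"
  by (metis Rep_G2_inject Rep_mult Rep_one red_app.simps(1))

definition ginv :: "G2 \<Rightarrow> G2" where
  "ginv x = Abs_G2 (rev (Rep_G2 x))"

lemma Rep_ginv: "Rep_G2 (ginv x) = rev (Rep_G2 x)"
  unfolding ginv_def by (rule Abs_G2_inverse) (simp add: reduced_rev Rep_reduced)

lemma ginv_right[simp]: "x \<star> ginv x = g2_one"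
  by (metis Rep_G2_inject Rep_ginv Rep_mult Rep_one Rep_reduced red_app_rev)

lemma ginv_left[simp]: "ginv x \<star> x = g2_one"
  by (metis Rep_G2_inject Rep_ginv Rep_mult Rep_one Rep_reduced red_app_rev reduced_rev rev_rev_ident)

lemma group_G2: "group G2grp"
proof (rule groupI)
  fix x assume "x \<in> carrier G2grp"
  show "\<exists>y\<in>carrier G2grp. y \<otimes>\<^bsub>G2grp\<^esub> x = \<one>\<^bsub>G2grp\<^esub>"
    by (rule bexI[of _ "ginv x"]) (auto simp: G2grp_def)
qed (auto simp: G2grp_def mult_assoc)

lemma m_inv_G2: "inv\<^bsub>G2grp\<^esub> x = ginv x"
  by (rule group.inv_equality[OF group_G2]) (auto simp: G2grp_def)

lemma ginv_ginv[simp]: "ginv (ginv x) = x"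
  by (metis Rep_G2_inverse Rep_ginv ginv_def rev_rev_ident)

lemma mult_left_ginv[simp]: "ginv x \<star> (x \<star> y) = y"
  by (simp add: mult_assoc[symmetric])

lemma mult_left_ginv2[simp]: "x \<star> (ginv x \<star> y) = y"
  by (simp add: mult_assoc[symmetric])

lemma cancel_left: "x \<star> y = x \<star> z \<longleftrightarrow> y = z"
  by (metis mult_left_ginv)

lemma inv_unique: "a \<star> b = g2_one \<Longrightarrow> b = ginv a"
  by (metis mult_left_ginv one_right)

lemma ginv_mult: "ginv (x \<star> y) = ginv y \<star> ginv x"
proof -
  have "(x \<star> y) \<star> (ginv y \<star> ginv x) = g2_one"
    by (simp add: mult_assoc)
  then show ?thesis by (rule inv_unique[symmetric])
qed

definition len :: "G2 \<Rightarrow> nat" where "len x = length (Rep_G2 x)"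

lemma len_mult_parity: "even (len (x \<star> y)) \<longleftrightarrow> even (len x + len y)"
  by (simp add: len_def Rep_mult parity_red_app)

lemma len_ginv[simp]: "len (ginv x) = len x"
  by (simp add: len_def Rep_ginv)

lemma len_one[simp]: "len g2_one = 0"
  by (simp add: len_def Rep_one)


definition nb :: "G2 \<Rightarrow> nat \<Rightarrow> G2" where "nb x i = x \<star> gen i"

lemma Rep_nb: "i < 3 \<Longrightarrow> Rep_G2 (nb x i) = step (Rep_G2 x) i"
  by (simp add: nb_def Rep_mult Rep_gen red_app_Cons)

lemma Rep_gen2: "i < 3 \<Longrightarrow> j < 3 \<Longrightarrow> Rep_G2 (gen i \<star> gen j) = (if i = j then [] else [i,j])"
  by (simp add: Rep_mult Rep_gen red_app_Cons step_def)

lemma gen_gen: "i < 3 \<Longrightarrow> gen i \<star> gen i = g2_one"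
  using Rep_gen2[of i i] by (simp add: Rep_G2_inject[symmetric] Rep_one)

lemma ginv_gen: "i < 3 \<Longrightarrow> ginv (gen i) = gen i"
  by (metis gen_gen inv_unique)

lemma nb_nb: "i < 3 \<Longrightarrow> nb (nb x i) i = x"
  by (simp add: nb_def mult_assoc gen_gen)

lemma len_nb_parity: "i < 3 \<Longrightarrow> even (len (nb x i)) \<longleftrightarrow> odd (len x)"
  using len_mult_parity[of x "gen i"] by (simp add: nb_def len_def Rep_gen)

lemma nb_neq: "i < 3 \<Longrightarrow> nb x i \<noteq> x"
  using len_nb_parity[of i x] by auto

lemma nb_neq': "i < 3 \<Longrightarrow> x \<noteq> nb x i"
  using nb_neq by metis

lemma gen_inj: "i < 3 \<Longrightarrow> j < 3 \<Longrightarrow> gen i = gen j \<Longrightarrow> i = j"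
  by (metis Rep_gen list.inject)

lemma nb_inj: "i < 3 \<Longrightarrow> j < 3 \<Longrightarrow> nb x i = nb x j \<longleftrightarrow> i = j"
  using gen_inj by (auto simp: nb_def cancel_left)

lemma len_gen2: "i < 3 \<Longrightarrow> j < 3 \<Longrightarrow> len (gen i \<star> gen j) = (if i = j then 0 else 2)"
  by (simp add: len_def Rep_gen2)

lemma len_gen: "i < 3 \<Longrightarrow> len (gen i) = 1"
  by (simp add: len_def Rep_gen)

lemma adj_iff: "adj x y \<longleftrightarrow> (\<exists>i<3. y = nb x i)"
  by (simp add: adj_def nb_def)

lemma relpow_adj: "(adj ^^ n) x y \<longleftrightarrow>
   (\<exists>l. length l = n \<and> set l \<subseteq> {0,1,2} \<and> Rep_G2 y = red_app (Rep_G2 x) l)"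
proof (induction n arbitrary: y)
  case 0
  then show ?case by (auto simp: Rep_G2_inject)
next
  case (Suc n)
  show ?case
  proof
    assume "(adj ^^ Suc n) x y"
    then obtain z where z: "(adj ^^ n) x z" "adj z y" by auto
    then obtain l where l: "length l = n" "set l \<subseteq> {0,1,2}" "Rep_G2 z = red_app (Rep_G2 x) l"
      using Suc.IH by blast
    obtain i where i: "i < 3" "y = nb z i" using z(2) adj_iff by blast
    have "Rep_G2 y = red_app (Rep_G2 x) (l @ [i])"
      using i l by (simp add: Rep_nb red_app_snoc)
    then show "\<exists>l. length l = Suc n \<and> set l \<subseteq> {0,1,2} \<and> Rep_G2 y = red_app (Rep_G2 x) l"
      using l i by (intro exI[of _ "l @ [i]"]) auto
  next
    assume "\<exists>l. length l = Suc n \<and> set l \<subseteq> {0,1,2} \<and> Rep_G2 y = red_app (Rep_G2 x) l"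
    then obtain l where l: "length l = Suc n" "set l \<subseteq> {0,1,2}" "Rep_G2 y = red_app (Rep_G2 x) l"
      by blast
    then obtain l' i where li: "l = l' @ [i]" by (metis length_Suc_conv_rev)
    have i: "i < 3" and l': "set l' \<subseteq> {0,1,2}" using l(2) li by auto
    define z where "z = Abs_G2 (red_app (Rep_G2 x) l')"
    have Rz: "Rep_G2 z = red_app (Rep_G2 x) l'"
      unfolding z_def by (rule Abs_G2_inverse) (simp add: reduced_red_app[OF Rep_reduced l'])
    have "(adj ^^ n) x z" using Suc.IH Rz l li l' by auto
    moreover have "y = nb z i"
      using l(3) li Rz i by (simp add: Rep_nb red_app_snoc Rep_G2_inject[symmetric])
    then have "adj z y" using i adj_iff by blast
    ultimately show "(adj ^^ Suc n) x y" by auto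
  qed
qed

lemma gdist_eq: "gdist x y = len (ginv x \<star> y)"
  unfolding gdist_def
proof (rule Least_equality)
  show "(adj ^^ len (ginv x \<star> y)) x y"
    unfolding relpow_adj
  proof (intro exI conjI)
    show "set (Rep_G2 (ginv x \<star> y)) \<subseteq> {0,1,2}" by (rule reduced_set[OF Rep_reduced])
  qed (simp_all add: len_def Rep_mult[symmetric])
next
  fix n assume "(adj ^^ n) x y"
  then obtain l where l: "length l = n" "set l \<subseteq> {0,1,2}" "Rep_G2 y = red_app (Rep_G2 x) l"
    using relpow_adj by blast
  define w where "w = Abs_G2 (red_app [] l)"
  have Rw: "Rep_G2 w = red_app [] l"
    unfolding w_def by (rule Abs_G2_inverse) (simp add: reduced_red_app[OF reduced_Nil l(2)])
  have "Rep_G2 (x \<star> w) = red_app (Rep_G2 x) l"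
    by (simp add: Rep_mult Rw red_app_assoc_gen[OF Rep_reduced reduced_Nil l(2)])
  then have "y = x \<star> w" using l(3) Rep_G2_inject by metis
  then have "ginv x \<star> y = w" by simp
  then show "len (ginv x \<star> y) \<le> n"
    using length_red_app_le[of "[]" l] l(1) by (simp add: len_def Rw)
qed

lemma gdist_sym: "gdist x y = gdist y x"
proof -
  have "ginv (ginv x \<star> y) = ginv y \<star> x" by (simp add: ginv_mult)
  then show ?thesis unfolding gdist_eq by (metis len_ginv)
qed

lemma gdist_self[simp]: "gdist x x = 0"
  by (simp add: gdist_eq)

lemma gdist_nb: "i < 3 \<Longrightarrow> gdist x (nb x i) = 1"
  by (simp add: gdist_eq nb_def len_gen)

lemma gdist_nb': "i < 3 \<Longrightarrow> gdist (nb x i) x = 1"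
  using gdist_nb gdist_sym by metis

lemma gdist_nb_nb: "i < 3 \<Longrightarrow> j < 3 \<Longrightarrow> gdist (nb x i) (nb x j) = (if i = j then 0 else 2)"
  by (simp add: gdist_eq nb_def ginv_mult ginv_gen mult_assoc len_gen2[symmetric])

lemma reduced_short:
  assumes "reduced w" "length w \<le> 2"
  shows "w = [] \<or> (\<exists>i<3. w = [i]) \<or> (\<exists>i<3. \<exists>j<3. i \<noteq> j \<and> w = [i,j])"
proof -
  have s: "set w \<subseteq> {0,1,2}" "successively (\<noteq>) w" using assms(1) by (auto simp: reduced_alt)
  show ?thesis
  proof (cases w rule: remdups_adj.cases)
    case (3 a b xs)
    then have "xs = []" using assms(2) by simp
    then show ?thesis using s 3 by auto
  qed (use s in auto)
qed

lemma ball1_sub: "y \<in> ball1 x \<Longrightarrow> y \<in> insert x (nb x ` {..<3})"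
proof -
  assume "y \<in> ball1 x"
  then have le: "len (ginv x \<star> y) \<le> 1" by (simp add: ball1_def gdist_eq)
  define w where "w = ginv x \<star> y"
  have y: "y = x \<star> w" by (simp add: w_def)
  from reduced_short[OF Rep_reduced[of w]] le
  consider "Rep_G2 w = []" | i where "i < 3" "Rep_G2 w = [i]"
    by (auto simp: len_def w_def)
  then show "y \<in> insert x (nb x ` {..<3})"
  proof cases
    case 1
    then have "w = g2_one" by (metis Rep_G2_inject Rep_one)
    then show ?thesis using y by simp
  next
    case (2 i)
    then have "w = gen i" by (metis Rep_G2_inject Rep_gen)
    then show ?thesis using y 2 by (auto simp: nb_def)
  qed
qed

lemma ball1_eq: "ball1 x = insert x (nb x ` {..<3})"
  using ball1_sub[of _ x] by (auto simp: ball1_def gdist_nb)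

lemma ball2_cases: "y \<in> ball2 x \<Longrightarrow>
   y = x \<or> (\<exists>i<3. y = nb x i) \<or> (\<exists>i<3. \<exists>j<3. y = nb (nb x i) j)"
proof -
  assume "y \<in> ball2 x"
  then have le: "len (ginv x \<star> y) \<le> 2" by (simp add: ball2_def gdist_eq)
  define w where "w = ginv x \<star> y"
  have y: "y = x \<star> w" by (simp add: w_def)
  from reduced_short[OF Rep_reduced[of w]] le
  consider "Rep_G2 w = []" | i where "i < 3" "Rep_G2 w = [i]"
    | i j where "i < 3" "j < 3" "i \<noteq> j" "Rep_G2 w = [i,j]"
    by (auto simp: len_def w_def)
  then show ?thesis
  proof cases
    case 1
    then have "w = g2_one" by (metis Rep_G2_inject Rep_one)
    then show ?thesis using y by simp
  next
    case (2 i)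
    then have "w = gen i" by (metis Rep_G2_inject Rep_gen)
    then show ?thesis using y 2 by (auto simp: nb_def)
  next
    case (3 i j)
    then have "w = gen i \<star> gen j" by (metis Rep_G2_inject Rep_gen2)
    then show ?thesis using y 3 by (auto simp: nb_def mult_assoc)
  qed
qed

lemma gdist2_cases: "gdist u v = 2 \<Longrightarrow>
   \<exists>m i j. i < 3 \<and> j < 3 \<and> i \<noteq> j \<and> u = nb m i \<and> v = nb m j"
proof -
  assume "gdist u v = 2"
  then have le: "len (ginv u \<star> v) = 2" by (simp add: gdist_eq)
  define w where "w = ginv u \<star> v"
  have v: "v = u \<star> w" by (simp add: w_def)
  from reduced_short[OF Rep_reduced[of w]] le
  obtain i j where ij: "i < 3" "j < 3" "i \<noteq> j" "Rep_G2 w = [i,j]"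
    by (auto simp: len_def w_def)
  then have "w = gen i \<star> gen j" by (metis Rep_G2_inject Rep_gen2)
  then show ?thesis using ij v
    by (intro exI[of _ "nb u i"] exI[of _ i] exI[of _ j]) (auto simp: nb_nb nb_def mult_assoc gen_gen)
qed

lemma gdist_le_word: "gdist x y \<le> k \<Longrightarrow>
   \<exists>w. set w \<subseteq> {0,1,2} \<and> length w \<le> k \<and> Rep_G2 y = red_app (Rep_G2 x) w"
proof (intro exI conjI)
  show "set (Rep_G2 (ginv x \<star> y)) \<subseteq> {0,1,2}" by (rule reduced_set[OF Rep_reduced])
qed (simp_all add: gdist_eq len_def Rep_mult[symmetric])


lemma lt3: "(i::nat) < 3 \<longleftrightarrow> i = 0 \<or> i = 1 \<or> i = 2"
  by auto

lemma lessThan3: "{..<3::nat} = {0,1,2}"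
  by (auto simp: numeral_3_eq_3 numeral_2_eq_2 less_Suc_eq)

definition Pset :: "(nat \<times> nat) set" where
  "Pset = {(i,j). i < 3 \<and> j < 3 \<and> i \<noteq> j}"

lemma Pset_eq: "Pset = {(0,1),(0,2),(1,0),(1,2),(2,0),(2,1)}"
  by (auto simp: Pset_def numeral_3_eq_3 numeral_2_eq_2 less_Suc_eq)

lemma finite_Pset[simp]: "finite Pset"
  by (simp add: Pset_eq)

definition eloc :: "real \<Rightarrow> real \<Rightarrow> (G2 \<Rightarrow> int) \<Rightarrow> G2 \<Rightarrow> real" where
  "eloc J1 J2 \<phi> x = J1 / 2 * (\<Sum>i<3. of_int (\<phi> x * \<phi> (nb x i)))
     + J2 / 2 * (\<Sum>p\<in>Pset. of_int (\<phi> (nb x (fst p)) * \<phi> (nb x (snd p))))"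

lemma nb_nb_neq: "i < 3 \<Longrightarrow> j < 3 \<Longrightarrow> k < 3 \<Longrightarrow> nb x j \<noteq> nb (nb x i) k"
  using len_nb_parity[of j x] len_nb_parity[of k "nb x i"] len_nb_parity[of i x] by auto

lemma adj_ball_set: "{(u,v). u \<in> ball1 x \<and> v \<in> ball1 x \<and> adj u v} =
   (\<lambda>i. (x, nb x i)) ` {..<3} \<union> (\<lambda>i. (nb x i, x)) ` {..<3}"
proof (rule Set.set_eqI)
  fix p :: "G2 \<times> G2"
  obtain u v where p: "p = (u,v)" by (cases p)
  have "u \<in> ball1 x \<and> v \<in> ball1 x \<and> adj u v \<longleftrightarrow>
        (\<exists>i<3. u = x \<and> v = nb x i) \<or> (\<exists>i<3. u = nb x i \<and> v = x)"
  proof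
    assume a: "u \<in> ball1 x \<and> v \<in> ball1 x \<and> adj u v"
    then obtain k where k: "k < 3" "v = nb u k" using adj_iff by blast
    have u: "u = x \<or> (\<exists>i<3. u = nb x i)" using a unfolding ball1_eq by auto
    have v: "v = x \<or> (\<exists>i<3. v = nb x i)" using a unfolding ball1_eq by auto
    show "(\<exists>i<3. u = x \<and> v = nb x i) \<or> (\<exists>i<3. u = nb x i \<and> v = x)"
    proof (cases "u = x")
      case True
      then show ?thesis using k by blast
    next
      case False
      then obtain i where i: "i < 3" "u = nb x i" using u by blast
      have "v = x"
      proof (rule ccontr)
        assume "v \<noteq> x"
        then obtain j where j: "j < 3" "v = nb x j" using v by blast
        show False using nb_nb_neq[OF i(1) j(1) k(1), of x] i j k by simp
      qed
      then show ?thesis using i by blast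
    qed
  next
    assume "(\<exists>i<3. u = x \<and> v = nb x i) \<or> (\<exists>i<3. u = nb x i \<and> v = x)"
    then show "u \<in> ball1 x \<and> v \<in> ball1 x \<and> adj u v"
    proof
      assume "\<exists>i<3. u = x \<and> v = nb x i"
      then obtain i where "i < 3" "u = x" "v = nb x i" by blast
      then show ?thesis unfolding ball1_eq adj_iff by blast
    next
      assume "\<exists>i<3. u = nb x i \<and> v = x"
      then obtain i where i: "i < 3" "u = nb x i" "v = x" by blast
      then have "v = nb u i" using nb_nb by simp
      then show ?thesis using i unfolding ball1_eq adj_iff by blast
    qed
  qed
  then show "p \<in> {(u,v). u \<in> ball1 x \<and> v \<in> ball1 x \<and> adj u v} \<longleftrightarrow>
     p \<in> (\<lambda>i. (x, nb x i)) ` {..<3} \<union> (\<lambda>i. (nb x i, x)) ` {..<3}"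
    using p by auto
qed

lemma d2_ball_set: "{(u,v). u \<in> ball1 x \<and> v \<in> ball1 x \<and> gdist u v = 2} =
   (\<lambda>p. (nb x (fst p), nb x (snd p))) ` Pset"
proof (rule Set.set_eqI)
  fix p :: "G2 \<times> G2"
  obtain u v where p: "p = (u,v)" by (cases p)
  have "u \<in> ball1 x \<and> v \<in> ball1 x \<and> gdist u v = 2 \<longleftrightarrow>
        (\<exists>i<3. \<exists>j<3. i \<noteq> j \<and> u = nb x i \<and> v = nb x j)"
  proof
    assume a: "u \<in> ball1 x \<and> v \<in> ball1 x \<and> gdist u v = 2"
    have u: "u = x \<or> (\<exists>i<3. u = nb x i)" using a unfolding ball1_eq by auto
    have v: "v = x \<or> (\<exists>i<3. v = nb x i)" using a unfolding ball1_eq by auto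
    have "u \<noteq> x" using a v gdist_nb by auto
    then obtain i where i: "i < 3" "u = nb x i" using u by blast
    have "v \<noteq> x" using a i gdist_nb' by auto
    then obtain j where j: "j < 3" "v = nb x j" using v by blast
    have "i \<noteq> j" using a i j by auto
    then show "\<exists>i<3. \<exists>j<3. i \<noteq> j \<and> u = nb x i \<and> v = nb x j" using i j by blast
  next
    assume "\<exists>i<3. \<exists>j<3. i \<noteq> j \<and> u = nb x i \<and> v = nb x j"
    then obtain i j where "i < 3" "j < 3" "i \<noteq> j" "u = nb x i" "v = nb x j" by blast
    then show "u \<in> ball1 x \<and> v \<in> ball1 x \<and> gdist u v = 2"
      unfolding ball1_eq by (simp add: gdist_nb_nb)
  qed
  then show "p \<in> {(u,v). u \<in> ball1 x \<and> v \<in> ball1 x \<and> gdist u v = 2} \<longleftrightarrow>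
     p \<in> (\<lambda>p. (nb x (fst p), nb x (snd p))) ` Pset"
    using p unfolding Pset_def by force
qed

lemma ball_energy_eq: "ball_energy J1 J2 \<phi> x = eloc J1 J2 \<phi> x"
proof -
  let ?f = "\<lambda>p. real_of_int (\<phi> (fst p) * \<phi> (snd p))"
  have inj1: "inj_on (\<lambda>i. (x, nb x i)) {..<3}" by (auto simp: inj_on_def nb_inj)
  have inj2: "inj_on (\<lambda>i. (nb x i, x)) {..<3}" by (auto simp: inj_on_def nb_inj)
  have disj: "(\<lambda>i. (x, nb x i)) ` {..<3} \<inter> (\<lambda>i. (nb x i, x)) ` {..<3} = {}"
    using nb_neq by fastforce
  have "(\<Sum>p\<in>(\<lambda>i. (x, nb x i)) ` {..<3} \<union> (\<lambda>i. (nb x i, x)) ` {..<3}. ?f p)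
     = (\<Sum>p\<in>(\<lambda>i. (x, nb x i)) ` {..<3}. ?f p) + (\<Sum>p\<in>(\<lambda>i. (nb x i, x)) ` {..<3}. ?f p)"
    by (rule sum.union_disjoint) (use disj in auto)
  also have "(\<Sum>p\<in>(\<lambda>i. (x, nb x i)) ` {..<3}. ?f p) = (\<Sum>i<3. of_int (\<phi> x * \<phi> (nb x i)))"
    by (simp add: sum.reindex[OF inj1])
  also have "(\<Sum>p\<in>(\<lambda>i. (nb x i, x)) ` {..<3}. ?f p) = (\<Sum>i<3. of_int (\<phi> x * \<phi> (nb x i)))"
    by (simp add: sum.reindex[OF inj2] mult.commute)
  finally have s1: "(\<Sum>p\<in>{(u,v). u \<in> ball1 x \<and> v \<in> ball1 x \<and> adj u v}. ?f p)
     = 2 * (\<Sum>i<3. of_int (\<phi> x * \<phi> (nb x i)))"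
    unfolding adj_ball_set by simp
  have inj3: "inj_on (\<lambda>p. (nb x (fst p), nb x (snd p))) Pset"
    by (auto simp: inj_on_def nb_inj Pset_def)
  have s2: "(\<Sum>p\<in>{(u,v). u \<in> ball1 x \<and> v \<in> ball1 x \<and> gdist u v = 2}. ?f p)
     = (\<Sum>p\<in>Pset. of_int (\<phi> (nb x (fst p)) * \<phi> (nb x (snd p))))"
    unfolding d2_ball_set by (simp add: sum.reindex[OF inj3])
  show ?thesis unfolding ball_energy_def eloc_def s1 s2 by simp
qed

lemma ball1_minus: "ball1 x - {x} = nb x ` {..<3}"
  unfolding ball1_eq using nb_neq by auto

lemma same_leaves_eq: "same_leaves x \<phi> = card {i. i < 3 \<and> \<phi> (nb x i) = \<phi> x}"
proof -
  have "{u \<in> ball1 x - {x}. \<phi> u = \<phi> x} = nb x ` {i. i < 3 \<and> \<phi> (nb x i) = \<phi> x}"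
    unfolding ball1_minus by auto
  moreover have "inj_on (nb x) {i. i < 3 \<and> \<phi> (nb x i) = \<phi> x}"
    by (auto simp: inj_on_def nb_inj)
  ultimately show ?thesis unfolding same_leaves_def by (simp add: card_image)
qed

lemma card_lt_Suc: "card {i. i < Suc n \<and> P i} = card {i. i < n \<and> P i} + of_bool (P n)"
proof (cases "P n")
  case True
  then have "{i. i < Suc n \<and> P i} = insert n {i. i < n \<and> P i}" by (auto simp: less_Suc_eq)
  then show ?thesis using True by simp
next
  case False
  then have "{i. i < Suc n \<and> P i} = {i. i < n \<and> P i}" by (auto simp: less_Suc_eq)
  then show ?thesis using False by simp
qed

lemma card3: "card {i. i < 3 \<and> P i} = of_bool (P 0) + of_bool (P 1) + of_bool (P (2::nat))"
  unfolding numeral_3_eq_3 card_lt_Suc by (simp add: numeral_2_eq_2)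

lemma energy_arith:
  fixes s0 s1 s2 s3 :: int
  assumes "s0 \<in> {-1,1}" "s1 \<in> {-1,1}" "s2 \<in> {-1,1}" "s3 \<in> {-1,1}"
  shows "J1 / 2 * (real_of_int (s0 * s1) + of_int (s0 * s2) + of_int (s0 * s3))
     + J2 / 2 * (2 * of_int (s1 * s2) + 2 * of_int (s1 * s3) + 2 * of_int (s2 * s3))
   = Uval J1 J2 (let n = of_bool (s1 = s0) + of_bool (s2 = s0) + of_bool (s3 = s0) :: nat in
        if n = 3 then 1 else if n = 2 then 2 else if n = 1 then 4 else 3)"
  using assms by (auto simp: Uval_def algebra_simps)

lemma eloc_class: "is_config \<phi> \<Longrightarrow> eloc J1 J2 \<phi> x = Uval J1 J2 (ball_class x \<phi>)"
proof -
  assume c: "is_config \<phi>"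
  have v: "\<phi> y \<in> {-1,1}" for y using c by (simp add: is_config_def)
  have e: "eloc J1 J2 \<phi> x = J1 / 2 * (real_of_int (\<phi> x * \<phi> (nb x 0)) + of_int (\<phi> x * \<phi> (nb x 1)) + of_int (\<phi> x * \<phi> (nb x 2)))
     + J2 / 2 * (2 * of_int (\<phi> (nb x 0) * \<phi> (nb x 1)) + 2 * of_int (\<phi> (nb x 0) * \<phi> (nb x 2)) + 2 * of_int (\<phi> (nb x 1) * \<phi> (nb x 2)))"
    unfolding eloc_def Pset_eq lessThan3 by (simp add: algebra_simps)
  show ?thesis
    unfolding e ball_class_def same_leaves_eq card3
    using energy_arith[OF v[of x] v[of "nb x 0"] v[of "nb x 1"] v[of "nb x 2"], of J1 J2]
    by (simp add: Let_def)
qed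

lemma ball_energy_class: "is_config \<phi> \<Longrightarrow> ball_energy J1 J2 \<phi> x = Uval J1 J2 (ball_class x \<phi>)"
  by (simp add: ball_energy_eq eloc_class)

lemma class_range: "ball_class x \<phi> \<in> {1,2,3,4}"
  by (simp add: ball_class_def)

lemma Uval_ge: "m \<in> {1,2,3,4} \<Longrightarrow> Umin J1 J2 \<le> Uval J1 J2 m"
  unfolding Umin_def by (rule Min_le) auto

lemma Umin_attained: "\<exists>m\<in>{1,2,3,4}. Uval J1 J2 m = Umin J1 J2"
proof -
  have "Umin J1 J2 \<in> Uval J1 J2 ` {1,2,3,4}" unfolding Umin_def by (rule Min_in) auto
  then show ?thesis by force
qed

lemma all3: "(\<forall>i<3. P i) \<longleftrightarrow> P 0 \<and> P 1 \<and> P (2::nat)"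
  by (auto simp: numeral_3_eq_3 numeral_2_eq_2 less_Suc_eq)

lemma class1_iff: "ball_class x \<phi> = 1 \<longleftrightarrow> (\<forall>i<3. \<phi> (nb x i) = \<phi> x)"
  unfolding ball_class_def same_leaves_eq card3 all3 by simp

lemma class3_iff: "ball_class x \<phi> = 3 \<longleftrightarrow> (\<forall>i<3. \<phi> (nb x i) \<noteq> \<phi> x)"
  unfolding ball_class_def same_leaves_eq card3 all3 by simp


definition alt :: "int \<Rightarrow> G2 \<Rightarrow> int" where
  "alt c y = c * (-1) ^ len y"

lemma alt_nb: "i < 3 \<Longrightarrow> alt c (nb x i) = - alt c x"
  using len_nb_parity[of i x] by (simp add: alt_def minus_one_power_iff)

lemma alt_nb_nb: "i < 3 \<Longrightarrow> j < 3 \<Longrightarrow> alt c (nb (nb x i) j) = alt c x"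
  by (simp add: alt_nb)

lemma config_const: "c \<in> {-1,1} \<Longrightarrow> is_config (\<lambda>_. c)"
  by (simp add: is_config_def)

lemma config_alt: "c \<in> {-1,1} \<Longrightarrow> is_config (alt c)"
  by (auto simp: is_config_def alt_def minus_one_power_iff)

lemma class_const: "ball_class x (\<lambda>_. c) = 1"
  by (rule class1_iff[THEN iffD2]) simp

lemma class_alt: "c \<in> {-1,1} \<Longrightarrow> ball_class x (alt c) = 3"
  unfolding class3_iff using alt_nb by (auto simp: alt_def minus_one_power_iff)

definition Heven :: "G2 set" where "Heven = {g. even (len g)}"

lemma carrier_G2[simp]: "carrier G2grp = UNIV" by (simp add: G2grp_def)
lemma mult_G2[simp]: "x \<otimes>\<^bsub>G2grp\<^esub> y = x \<star> y" by (simp add: G2grp_def)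

lemma subgroup_Heven: "subgroup Heven G2grp"
proof (rule group.subgroupI[OF group_G2])
  have "g2_one \<in> Heven" by (simp add: Heven_def)
  then show "Heven \<noteq> {}" by blast
next
  fix a assume "a \<in> Heven" then show "inv\<^bsub>G2grp\<^esub> a \<in> Heven"
    by (simp add: m_inv_G2 Heven_def)
next
  fix a b assume "a \<in> Heven" "b \<in> Heven" then show "a \<otimes>\<^bsub>G2grp\<^esub> b \<in> Heven"
    by (simp add: Heven_def len_mult_parity)
qed simp

lemma coset_Heven: "Heven #>\<^bsub>G2grp\<^esub> a = {z. even (len z) = even (len a)}"
proof -
  have "z \<in> Heven #>\<^bsub>G2grp\<^esub> a" if "even (len z) = even (len a)" for z
  proof -
    have "z = (z \<star> ginv a) \<star> a" by (simp add: mult_assoc)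
    moreover have "z \<star> ginv a \<in> Heven" using that by (simp add: Heven_def len_mult_parity)
    ultimately show ?thesis unfolding r_coset_def by auto
  qed
  moreover have "even (len z) = even (len a)" if "z \<in> Heven #>\<^bsub>G2grp\<^esub> a" for z
    using that unfolding r_coset_def by (auto simp: Heven_def len_mult_parity)
  ultimately show ?thesis by blast
qed

lemma rcosets_Heven: "rcosets\<^bsub>G2grp\<^esub> Heven \<subseteq> {{z. even (len z)}, {z. odd (len z)}}"
  unfolding RCOSETS_def coset_Heven by auto

lemma card2: "card {A, B} \<le> 2"
  by (cases "A = B") auto

lemma periodic_Heven:
  assumes "\<forall>g\<in>Heven. \<forall>h. \<phi> (g \<star> h) = \<phi> h"
  shows "periodic \<phi>" "period_le2 \<phi>"
proof -
  have f: "finite (rcosets\<^bsub>G2grp\<^esub> Heven)" using rcosets_Heven finite_subset by blast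
  have c: "card (rcosets\<^bsub>G2grp\<^esub> Heven) \<le> 2"
    using card_mono[OF _ rcosets_Heven] card2 by (meson finite.emptyI finite.insertI order_trans)
  show "periodic \<phi>" unfolding periodic_def periodic_idx_def
    using subgroup_Heven f assms by auto
  show "period_le2 \<phi>" unfolding period_le2_def periodic_idx_def
    using subgroup_Heven f c assms by auto
qed

lemma periodic_const: "periodic (\<lambda>_. c)" "period_le2 (\<lambda>_. c)"
  by (rule periodic_Heven; simp)+

lemma periodic_alt: "periodic (alt c)" "period_le2 (alt c)"
proof -
  have "\<forall>g\<in>Heven. \<forall>h. alt c (g \<star> h) = alt c h"
    by (auto simp: Heven_def alt_def minus_one_power_iff len_mult_parity)
  then show "periodic (alt c)" "period_le2 (alt c)" by (rule periodic_Heven)+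
qed

lemma class_in_S_iff: "is_config \<phi> \<Longrightarrow>
   ball_class x \<phi> \<in> Sset J1 J2 \<longleftrightarrow> ball_energy J1 J2 \<phi> x = Umin J1 J2"
  using class_range[of x \<phi>] by (simp add: Sset_def ball_energy_class)

lemma GS_const: "c \<in> {-1,1} \<Longrightarrow> 1 \<in> Sset J1 J2 \<Longrightarrow> (\<lambda>_. c) \<in> GS J1 J2"
proof -
  assume c: "c \<in> {-1,1}" and s: "1 \<in> Sset J1 J2"
  have cc: "is_config (\<lambda>_. c)" by (rule config_const[OF c])
  have "ball_energy J1 J2 (\<lambda>_. c) x = Umin J1 J2" for x
    using class_in_S_iff[OF cc, of x J1 J2] class_const[of x c] s by simp
  then show ?thesis unfolding GS_def ground_state_def using cc periodic_const by simp
qed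

lemma GS_alt: "c \<in> {-1,1} \<Longrightarrow> 3 \<in> Sset J1 J2 \<Longrightarrow> alt c \<in> GS J1 J2"
proof -
  assume c: "c \<in> {-1,1}" and s: "3 \<in> Sset J1 J2"
  have cc: "is_config (alt c)" by (rule config_alt[OF c])
  have "ball_energy J1 J2 (alt c) x = Umin J1 J2" for x
    using class_in_S_iff[OF cc, of x J1 J2] class_alt[OF c, of x] s by simp
  then show ?thesis unfolding GS_def ground_state_def using cc periodic_alt by simp
qed

lemma G2_induct:
  assumes "P g2_one" "\<And>x i. i < 3 \<Longrightarrow> P x \<Longrightarrow> P (nb x i)"
  shows "P y"
proof -
  have "reduced w \<Longrightarrow> P (Abs_G2 w)" for w
  proof (induction w rule: rev_induct)
    case Nil then show ?case using assms(1) by (simp add: g2_one_def)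
  next
    case (snoc a w)
    then have w: "reduced w" and a: "a < 3" and l: "w \<noteq> [] \<longrightarrow> last w \<noteq> a"
      by (auto simp: reduced_snoc)
    have "Rep_G2 (nb (Abs_G2 w) a) = w @ [a]"
      using a l w by (auto simp: Rep_nb Abs_G2_inverse step_def)
    then have "Abs_G2 (w @ [a]) = nb (Abs_G2 w) a" by (metis Rep_G2_inverse)
    then show ?case using assms(2)[OF a snoc.IH[OF w]] by simp
  qed
  then show ?thesis using Rep_reduced Rep_G2_inverse by metis
qed

lemma class_prop1: "ball_class x \<phi> = 1 \<Longrightarrow> i < 3 \<Longrightarrow> ball_class (nb x i) \<phi> \<in> {1,3} \<Longrightarrow>
   ball_class (nb x i) \<phi> = 1"
proof -
  assume h: "ball_class x \<phi> = 1" and i: "i < 3" and m: "ball_class (nb x i) \<phi> \<in> {1,3}"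
  have "\<forall>j<3. \<phi> (nb x j) = \<phi> x" using h by (simp only: class1_iff)
  then have e: "\<phi> (nb x i) = \<phi> x" using i by blast
  have "ball_class (nb x i) \<phi> \<noteq> 3"
  proof
    assume "ball_class (nb x i) \<phi> = 3"
    then have "\<forall>j<3. \<phi> (nb (nb x i) j) \<noteq> \<phi> (nb x i)" by (simp only: class3_iff)
    then have "\<phi> (nb (nb x i) i) \<noteq> \<phi> (nb x i)" using i by blast
    then show False using e nb_nb[OF i] by simp
  qed
  then show ?thesis using m by blast
qed

lemma class_prop3: "ball_class x \<phi> = 3 \<Longrightarrow> i < 3 \<Longrightarrow> ball_class (nb x i) \<phi> \<in> {1,3} \<Longrightarrow>
   ball_class (nb x i) \<phi> = 3"
proof -
  assume h: "ball_class x \<phi> = 3" and i: "i < 3" and m: "ball_class (nb x i) \<phi> \<in> {1,3}"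
  have "\<forall>j<3. \<phi> (nb x j) \<noteq> \<phi> x" using h by (simp only: class3_iff)
  then have e: "\<phi> (nb x i) \<noteq> \<phi> x" using i by blast
  have "ball_class (nb x i) \<phi> \<noteq> 1"
  proof
    assume "ball_class (nb x i) \<phi> = 1"
    then have "\<forall>j<3. \<phi> (nb (nb x i) j) = \<phi> (nb x i)" by (simp only: class1_iff)
    then have "\<phi> (nb (nb x i) i) = \<phi> (nb x i)" using i by blast
    then show False using e nb_nb[OF i] by simp
  qed
  then show ?thesis using m by blast
qed

lemma config_neg: "is_config \<phi> \<Longrightarrow> \<phi> u \<noteq> \<phi> v \<Longrightarrow> \<phi> u = - \<phi> v"
proof -
  assume c: "is_config \<phi>" and d: "\<phi> u \<noteq> \<phi> v"
  have "\<phi> u \<in> {-1,1}" "\<phi> v \<in> {-1,1}" using c by (auto simp: is_config_def)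
  then show ?thesis using d by auto
qed

lemma classify:
  assumes c: "is_config \<phi>" and cl: "\<forall>x. ball_class x \<phi> \<in> {1,3}"
  shows "\<phi> = (\<lambda>_. \<phi> g2_one) \<or> \<phi> = alt (\<phi> g2_one)"
proof -
  have same: "ball_class y \<phi> = ball_class g2_one \<phi>" for y
  proof (induction y rule: G2_induct)
    case (2 x i)
    have a: "ball_class x \<phi> = 1 \<or> ball_class x \<phi> = 3" using cl by auto
    have b: "ball_class (nb x i) \<phi> \<in> {1,3}" using cl by auto
    show ?case
    proof (cases "ball_class x \<phi> = 1")
      case True
      then show ?thesis using class_prop1[OF True 2(1) b] 2(2) by simp
    next
      case False
      then have "ball_class x \<phi> = 3" using a by simp
      then show ?thesis using class_prop3[OF _ 2(1) b] 2(2) by simp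
    qed
  qed simp
  have "ball_class g2_one \<phi> = 1 \<or> ball_class g2_one \<phi> = 3" using cl by auto
  then show ?thesis
  proof
    assume h: "ball_class g2_one \<phi> = 1"
    have "\<phi> y = \<phi> g2_one" for y
    proof (induction y rule: G2_induct)
      case (2 x i)
      have "ball_class x \<phi> = 1" using same[of x] h by simp
      then have "\<forall>i<3. \<phi> (nb x i) = \<phi> x" by (simp only: class1_iff)
      then show ?case using 2 by simp
    qed simp
    then have "\<phi> = (\<lambda>_. \<phi> g2_one)" by (rule ext)
    then show ?thesis by blast
  next
    assume h: "ball_class g2_one \<phi> = 3"
    have "\<phi> y = alt (\<phi> g2_one) y" for y
    proof (induction y rule: G2_induct)
      case 1 then show ?case by (simp add: alt_def)
    next
      case (2 x i)
      have "ball_class x \<phi> = 3" using same[of x] h by simp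
      then have "\<forall>i<3. \<phi> (nb x i) \<noteq> \<phi> x" by (simp only: class3_iff)
      then have "\<phi> (nb x i) \<noteq> \<phi> x" using 2(1) by simp
      then have "\<phi> (nb x i) = - \<phi> x" using config_neg[OF c] by blast
      then show ?case using 2 alt_nb by simp
    qed
    then have "\<phi> = alt (\<phi> g2_one)" by (rule ext)
    then show ?thesis by blast
  qed
qed

lemma GS_class: "\<tau> \<in> GS J1 J2 \<Longrightarrow> ball_class x \<tau> \<in> Sset J1 J2"
  unfolding GS_def ground_state_def using class_in_S_iff by blast

lemma GS_subset:
  assumes S: "Sset J1 J2 \<subseteq> {1,3}"
  shows "GS J1 J2 \<subseteq> {(\<lambda>_. 1), (\<lambda>_. -1), alt 1, alt (-1)}"
proof
  fix \<tau> assume t: "\<tau> \<in> GS J1 J2"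
  then have c: "is_config \<tau>" by (simp add: GS_def ground_state_def)
  have "\<forall>x. ball_class x \<tau> \<in> {1,3}" using GS_class[OF t] S by blast
  then have "\<tau> = (\<lambda>_. \<tau> g2_one) \<or> \<tau> = alt (\<tau> g2_one)" using classify c by blast
  moreover have "\<tau> g2_one \<in> {-1,1}" using c by (simp add: is_config_def)
  ultimately show "\<tau> \<in> {(\<lambda>_. 1), (\<lambda>_. -1), alt 1, alt (-1)}" by auto
qed

lemma GS_finite: "Sset J1 J2 \<subseteq> {1,3} \<Longrightarrow> finite (GS J1 J2)"
proof -
  assume "Sset J1 J2 \<subseteq> {1,3}"
  from finite_subset[OF GS_subset[OF this]] show ?thesis by simp
qed

lemma GS_period: "Sset J1 J2 \<subseteq> {1,3} \<Longrightarrow> \<tau> \<in> GS J1 J2 \<Longrightarrow> period_le2 \<tau>"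
proof -
  assume "Sset J1 J2 \<subseteq> {1,3}" "\<tau> \<in> GS J1 J2"
  then have "\<tau> \<in> {(\<lambda>_. 1), (\<lambda>_. -1), alt 1, alt (-1)}" using GS_subset by blast
  then show ?thesis by (elim insertE emptyE) (simp_all add: periodic_const periodic_alt)
qed

lemma proper_ball:
  assumes S: "Sset J1 J2 \<subseteq> {1,3}" and c: "is_config \<sigma>"
    and good: "\<forall>y\<in>ball1 x. ball_class y \<sigma> \<in> Sset J1 J2"
  shows "\<not> improper J1 J2 \<sigma> x"
proof -
  have gx: "ball_class x \<sigma> \<in> Sset J1 J2" using good by (simp add: ball1_eq)
  have gn: "ball_class (nb x i) \<sigma> \<in> {1,3}" if "i < 3" for i
    using good S that by (auto simp: ball1_eq)
  have sx: "\<sigma> x \<in> {-1,1}" using c by (simp add: is_config_def)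
  have "ball_class x \<sigma> = 1 \<or> ball_class x \<sigma> = 3" using gx S by auto
  then show ?thesis
  proof
    assume h: "ball_class x \<sigma> = 1"
    have n1: "\<sigma> (nb x i) = \<sigma> x" if "i < 3" for i using h class1_iff that by metis
    have n2: "\<sigma> (nb (nb x i) j) = \<sigma> x" if "i < 3" "j < 3" for i j
    proof -
      have "ball_class (nb x i) \<sigma> = 1" using class_prop1[OF h that(1) gn[OF that(1)]] .
      then show ?thesis using class1_iff that n1 by metis
    qed
    have "(\<lambda>_. \<sigma> x) \<in> GS J1 J2" using GS_const[OF sx] gx h by simp
    moreover have "\<forall>y\<in>ball2 x. \<sigma> y = \<sigma> x" using ball2_cases n1 n2 by blast
    ultimately show ?thesis unfolding improper_def by force
  next
    assume h: "ball_class x \<sigma> = 3"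
    define c0 where "c0 = \<sigma> x * (-1) ^ len x"
    have c0: "c0 \<in> {-1,1}" using sx by (auto simp: c0_def minus_one_power_iff)
    have ax: "alt c0 x = \<sigma> x"
      using sx by (auto simp: c0_def alt_def minus_one_power_iff)
    have n1: "\<sigma> (nb x i) = - \<sigma> x" if "i < 3" for i
      using h class3_iff that config_neg[OF c] by metis
    have n2: "\<sigma> (nb (nb x i) j) = \<sigma> x" if "i < 3" "j < 3" for i j
    proof -
      have "ball_class (nb x i) \<sigma> = 3" using class_prop3[OF h that(1) gn[OF that(1)]] .
      then have "\<sigma> (nb (nb x i) j) = - \<sigma> (nb x i)" using class3_iff that config_neg[OF c] by metis
      then show ?thesis using n1 that by simp
    qed
    have "alt c0 \<in> GS J1 J2" using GS_alt[OF c0] gx h by simp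
    moreover have "\<forall>y\<in>ball2 x. \<sigma> y = alt c0 y"
    proof
      fix y assume "y \<in> ball2 x"
      then show "\<sigma> y = alt c0 y"
        using ball2_cases[of y x] n1 n2 ax alt_nb alt_nb_nb by auto
    qed
    ultimately show ?thesis unfolding improper_def by force
  qed
qed


lemma ball1_sym: "u \<in> ball1 m \<longleftrightarrow> m \<in> ball1 u"
  unfolding ball1_def using gdist_sym[of m u] by simp

lemma self_in_ball1: "x \<in> ball1 x"
  by (simp add: ball1_eq)

lemma nb_in_ball1: "i < 3 \<Longrightarrow> nb x i \<in> ball1 x"
  by (simp add: ball1_eq)

lemma finite_ball1: "finite (ball1 x)"
  by (simp add: ball1_eq)

lemma nb_pair_inj:
  assumes "i < 3" "j < 3" "k < 3" "l < 3" "i \<noteq> j"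
    and e1: "nb m i = nb m' k" and e2: "nb m j = nb m' l"
  shows "m = m' \<and> i = k \<and> j = l"
proof -
  have a: "ginv (nb m i) \<star> nb m j = gen i \<star> gen j"
    using assms(1,2) by (simp add: nb_def ginv_mult ginv_gen mult_assoc)
  have b: "ginv (nb m' k) \<star> nb m' l = gen k \<star> gen l"
    using assms(3,4) by (simp add: nb_def ginv_mult ginv_gen mult_assoc)
  have "gen i \<star> gen j = gen k \<star> gen l" using a b e1 e2 by simp
  then have "Rep_G2 (gen i \<star> gen j) = Rep_G2 (gen k \<star> gen l)" by simp
  then have ik: "i = k \<and> j = l" using assms(1-5) by (simp add: Rep_gen2 split: if_splits)
  then have "nb (nb m i) i = nb (nb m' i) i" using e1 by simp
  then have "m = m'" using nb_nb[OF assms(1)] by simp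
  then show ?thesis using ik by simp
qed

definition Fset :: "(G2 \<Rightarrow> int) \<Rightarrow> (G2 \<Rightarrow> int) \<Rightarrow> G2 set" where
  "Fset \<sigma> \<tau> = {m. \<exists>u\<in>ball1 m. \<sigma> u \<noteq> \<tau> u}"

lemma finite_Fset:
  assumes "finite {x. \<sigma> x \<noteq> \<tau> x}"
  shows "finite (Fset \<sigma> \<tau>)"
proof -
  have "Fset \<sigma> \<tau> \<subseteq> (\<Union>d\<in>{x. \<sigma> x \<noteq> \<tau> x}. ball1 d)"
    unfolding Fset_def using ball1_sym by blast
  moreover have "finite (\<Union>d\<in>{x. \<sigma> x \<noteq> \<tau> x}. ball1 d)"
    using assms finite_ball1 by blast
  ultimately show ?thesis using finite_subset by blast
qed

lemma sum_adj:
  fixes \<sigma> \<tau> :: "G2 \<Rightarrow> int"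
  assumes fin: "finite {x. \<sigma> x \<noteq> \<tau> x}"
  shows "(\<Sum>p\<in>{(x,y). adj x y \<and> \<sigma> x * \<sigma> y \<noteq> \<tau> x * \<tau> y}.
            real_of_int (\<sigma> (fst p) * \<sigma> (snd p) - \<tau> (fst p) * \<tau> (snd p)))
       = (\<Sum>x\<in>Fset \<sigma> \<tau>. \<Sum>i<3. real_of_int (\<sigma> x * \<sigma> (nb x i) - \<tau> x * \<tau> (nb x i)))"
proof -
  let ?g = "\<lambda>p. real_of_int (\<sigma> (fst p) * \<sigma> (snd p) - \<tau> (fst p) * \<tau> (snd p))"
  let ?h = "\<lambda>q. (fst q, nb (fst q) (snd q))"
  define B where "B = {q. snd q < 3 \<and> \<sigma> (fst q) * \<sigma> (nb (fst q) (snd q)) \<noteq> \<tau> (fst q) * \<tau> (nb (fst q) (snd q))}"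
  have A: "{(x,y). adj x y \<and> \<sigma> x * \<sigma> y \<noteq> \<tau> x * \<tau> y} = ?h ` B"
  proof (rule Set.set_eqI)
    fix p :: "G2 \<times> G2"
    obtain x y where p: "p = (x,y)" by (cases p)
    have "adj x y \<and> \<sigma> x * \<sigma> y \<noteq> \<tau> x * \<tau> y \<longleftrightarrow> (\<exists>i. (x,i) \<in> B \<and> y = nb x i)"
      unfolding adj_iff B_def by auto
    then show "p \<in> {(x,y). adj x y \<and> \<sigma> x * \<sigma> y \<noteq> \<tau> x * \<tau> y} \<longleftrightarrow> p \<in> ?h ` B"
      unfolding p by force
  qed
  have inj: "inj_on ?h B"
  proof (rule inj_onI)
    fix q q' assume "q \<in> B" "q' \<in> B" "?h q = ?h q'"
    then show "q = q'" by (cases q; cases q') (auto simp: B_def nb_inj)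
  qed
  have sub: "B \<subseteq> Fset \<sigma> \<tau> \<times> {..<3}"
  proof
    fix q assume q: "q \<in> B"
    obtain x i where qq: "q = (x,i)" by (cases q)
    have i: "i < 3" and d: "\<sigma> x \<noteq> \<tau> x \<or> \<sigma> (nb x i) \<noteq> \<tau> (nb x i)"
      using q qq by (auto simp: B_def)
    then have "x \<in> Fset \<sigma> \<tau>" unfolding Fset_def using self_in_ball1 nb_in_ball1 by blast
    then show "q \<in> Fset \<sigma> \<tau> \<times> {..<3}" using qq i by simp
  qed
  have "(\<Sum>p\<in>?h ` B. ?g p) = (\<Sum>q\<in>B. ?g (?h q))"
    using sum.reindex[OF inj, of ?g] by (simp add: comp_def)
  also have "\<dots> = (\<Sum>q\<in>Fset \<sigma> \<tau> \<times> {..<3}. ?g (?h q))"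
  proof (rule sum.mono_neutral_left)
    show "finite (Fset \<sigma> \<tau> \<times> {..<3::nat})" using finite_Fset[OF fin] by simp
    show "B \<subseteq> Fset \<sigma> \<tau> \<times> {..<3}" by (rule sub)
    show "\<forall>q\<in>Fset \<sigma> \<tau> \<times> {..<3} - B. ?g (?h q) = 0" by (auto simp: B_def simp del: of_int_diff of_int_mult)
  qed
  also have "\<dots> = (\<Sum>x\<in>Fset \<sigma> \<tau>. \<Sum>i<3. ?g (x, nb x i))"
    by (simp add: sum.cartesian_product split_beta)
  finally show ?thesis unfolding A by simp
qed

lemma sum_d2:
  fixes \<sigma> \<tau> :: "G2 \<Rightarrow> int"
  assumes fin: "finite {x. \<sigma> x \<noteq> \<tau> x}"
  shows "(\<Sum>p\<in>{(x,y). gdist x y = 2 \<and> \<sigma> x * \<sigma> y \<noteq> \<tau> x * \<tau> y}.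
            real_of_int (\<sigma> (fst p) * \<sigma> (snd p) - \<tau> (fst p) * \<tau> (snd p)))
       = (\<Sum>x\<in>Fset \<sigma> \<tau>. \<Sum>p\<in>Pset. real_of_int (\<sigma> (nb x (fst p)) * \<sigma> (nb x (snd p))
                                      - \<tau> (nb x (fst p)) * \<tau> (nb x (snd p))))"
proof -
  let ?g = "\<lambda>p. real_of_int (\<sigma> (fst p) * \<sigma> (snd p) - \<tau> (fst p) * \<tau> (snd p))"
  let ?h = "\<lambda>q. (nb (fst q) (fst (snd q)), nb (fst q) (snd (snd q)))"
  define B where "B = {q. snd q \<in> Pset \<and> \<sigma> (nb (fst q) (fst (snd q))) * \<sigma> (nb (fst q) (snd (snd q)))
       \<noteq> \<tau> (nb (fst q) (fst (snd q))) * \<tau> (nb (fst q) (snd (snd q)))}"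
  have A: "{(x,y). gdist x y = 2 \<and> \<sigma> x * \<sigma> y \<noteq> \<tau> x * \<tau> y} = ?h ` B"
  proof (rule Set.set_eqI)
    fix p :: "G2 \<times> G2"
    obtain x y where p: "p = (x,y)" by (cases p)
    have "gdist x y = 2 \<and> \<sigma> x * \<sigma> y \<noteq> \<tau> x * \<tau> y \<longleftrightarrow>
          (\<exists>m i j. (m,(i,j)) \<in> B \<and> x = nb m i \<and> y = nb m j)"
    proof
      assume a: "gdist x y = 2 \<and> \<sigma> x * \<sigma> y \<noteq> \<tau> x * \<tau> y"
      then obtain m i j where "i < 3" "j < 3" "i \<noteq> j" "x = nb m i" "y = nb m j"
        using gdist2_cases by blast
      then show "\<exists>m i j. (m,(i,j)) \<in> B \<and> x = nb m i \<and> y = nb m j"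
        using a by (auto simp: B_def Pset_def)
    next
      assume "\<exists>m i j. (m,(i,j)) \<in> B \<and> x = nb m i \<and> y = nb m j"
      then obtain m i j where "(m,(i,j)) \<in> B" "x = nb m i" "y = nb m j" by blast
      then show "gdist x y = 2 \<and> \<sigma> x * \<sigma> y \<noteq> \<tau> x * \<tau> y"
        by (auto simp: B_def Pset_def gdist_nb_nb)
    qed
    then show "p \<in> {(x,y). gdist x y = 2 \<and> \<sigma> x * \<sigma> y \<noteq> \<tau> x * \<tau> y} \<longleftrightarrow> p \<in> ?h ` B"
      unfolding p by force
  qed
  have inj: "inj_on ?h B"
  proof (rule inj_onI)
    fix q q' assume q: "q \<in> B" "q' \<in> B" "?h q = ?h q'"
    obtain m i j where qq: "q = (m,(i,j))" by (cases q) auto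
    obtain m' k l where qq': "q' = (m',(k,l))" by (cases q') auto
    have "i < 3" "j < 3" "i \<noteq> j" "k < 3" "l < 3" using q qq qq' by (auto simp: B_def Pset_def)
    moreover have "nb m i = nb m' k" "nb m j = nb m' l" using q(3) qq qq' by auto
    ultimately have "m = m' \<and> i = k \<and> j = l" using nb_pair_inj by blast
    then show "q = q'" using qq qq' by simp
  qed
  have sub: "B \<subseteq> Fset \<sigma> \<tau> \<times> Pset"
  proof
    fix q assume q: "q \<in> B"
    obtain m i j where qq: "q = (m,(i,j))" by (cases q) auto
    have ij: "(i,j) \<in> Pset" and d: "\<sigma> (nb m i) \<noteq> \<tau> (nb m i) \<or> \<sigma> (nb m j) \<noteq> \<tau> (nb m j)"
      using q qq by (auto simp: B_def)
    have "i < 3" "j < 3" using ij by (auto simp: Pset_def)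
    then have "m \<in> Fset \<sigma> \<tau>" unfolding Fset_def using d nb_in_ball1 by blast
    then show "q \<in> Fset \<sigma> \<tau> \<times> Pset" using qq ij by simp
  qed
  have "(\<Sum>p\<in>?h ` B. ?g p) = (\<Sum>q\<in>B. ?g (?h q))"
    using sum.reindex[OF inj, of ?g] by (simp add: comp_def)
  also have "\<dots> = (\<Sum>q\<in>Fset \<sigma> \<tau> \<times> Pset. ?g (?h q))"
  proof (rule sum.mono_neutral_left)
    show "finite (Fset \<sigma> \<tau> \<times> Pset)" using finite_Fset[OF fin] by simp
    show "B \<subseteq> Fset \<sigma> \<tau> \<times> Pset" by (rule sub)
    show "\<forall>q\<in>Fset \<sigma> \<tau> \<times> Pset - B. ?g (?h q) = 0" by (auto simp: B_def simp del: of_int_diff of_int_mult)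
  qed
  also have "\<dots> = (\<Sum>x\<in>Fset \<sigma> \<tau>. \<Sum>p\<in>Pset. ?g (?h (x,p)))"
    by (simp add: sum.cartesian_product split_beta)
  finally show ?thesis unfolding A by simp
qed

lemma relH_eq:
  assumes fin: "finite {x. \<sigma> x \<noteq> \<tau> x}"
  shows "relH J1 J2 \<sigma> \<tau> = (\<Sum>x\<in>Fset \<sigma> \<tau>. eloc J1 J2 \<sigma> x - eloc J1 J2 \<tau> x)"
proof -
  have e: "eloc J1 J2 \<sigma> x - eloc J1 J2 \<tau> x =
     J1 / 2 * (\<Sum>i<3. real_of_int (\<sigma> x * \<sigma> (nb x i) - \<tau> x * \<tau> (nb x i)))
   + J2 / 2 * (\<Sum>p\<in>Pset. real_of_int (\<sigma> (nb x (fst p)) * \<sigma> (nb x (snd p))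
                                      - \<tau> (nb x (fst p)) * \<tau> (nb x (snd p))))" for x
    unfolding eloc_def by (simp add: sum_subtractf algebra_simps)
  show ?thesis
    unfolding relH_def sum_adj[OF fin] sum_d2[OF fin] e
    by (simp add: sum.distrib sum_distrib_left)
qed


lemma class_local: "\<forall>u\<in>ball1 y. \<sigma> u = \<tau> u \<Longrightarrow> ball_class y \<sigma> = ball_class y \<tau>"
proof -
  assume a: "\<forall>u\<in>ball1 y. \<sigma> u = \<tau> u"
  have "{u \<in> ball1 y - {y}. \<sigma> u = \<sigma> y} = {u \<in> ball1 y - {y}. \<tau> u = \<tau> y}"
    using a self_in_ball1[of y] by auto
  then show ?thesis unfolding ball_class_def same_leaves_def by simp
qed

lemma peierls_bound:
  assumes S: "Sset J1 J2 \<subseteq> {1,3}"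
  shows "\<exists>lam>0. \<forall>\<tau>\<in>GS J1 J2. \<forall>\<sigma>. is_config \<sigma> \<and> finite {x. \<sigma> x \<noteq> \<tau> x} \<longrightarrow>
        relH J1 J2 \<sigma> \<tau> \<ge> lam * real (boundary_size J1 J2 \<sigma>)"
proof -
  define Bd where "Bd = {1,2,3,4} - Sset J1 J2"
  define \<delta> where "\<delta> = Min ((\<lambda>m. Uval J1 J2 m - Umin J1 J2) ` Bd)"
  have two: "2 \<in> Bd" using S by (auto simp: Bd_def)
  have finBd: "finite Bd" by (simp add: Bd_def)
  have dle: "\<delta> \<le> Uval J1 J2 m - Umin J1 J2" if "m \<in> Bd" for m
    unfolding \<delta>_def using finBd that by (intro Min_le) auto
  have dpos: "\<delta> > 0"
  proof -
    have "\<delta> \<in> (\<lambda>m. Uval J1 J2 m - Umin J1 J2) ` Bd"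
      unfolding \<delta>_def using finBd two by (intro Min_in) auto
    then obtain m where m: "m \<in> Bd" "\<delta> = Uval J1 J2 m - Umin J1 J2" by blast
    have m4: "m \<in> {1,2,3,4}" and mS: "m \<notin> Sset J1 J2" using m(1) by (auto simp: Bd_def)
    have "Uval J1 J2 m \<noteq> Umin J1 J2" using mS m4 by (auto simp: Sset_def)
    moreover have "Umin J1 J2 \<le> Uval J1 J2 m" by (rule Uval_ge[OF m4])
    ultimately show ?thesis using m(2) by simp
  qed
  define L3 where "L3 = {w. set w \<subseteq> {0,1,2::nat} \<and> length w \<le> 3}"
  have finL3: "finite L3" unfolding L3_def by (rule finite_lists_length_le) simp
  define K where "K = card L3"
  have nil: "[] \<in> L3" by (simp add: L3_def)
  have Kpos: "K > 0" unfolding K_def using finL3 nil card_gt_0_iff by blast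
  define lam where "lam = \<delta> / real K"
  have lampos: "lam > 0" unfolding lam_def using dpos Kpos by simp
  have main: "relH J1 J2 \<sigma> \<tau> \<ge> lam * real (boundary_size J1 J2 \<sigma>)"
    if t: "\<tau> \<in> GS J1 J2" and c: "is_config \<sigma>" and fin: "finite {x. \<sigma> x \<noteq> \<tau> x}" for \<tau> \<sigma>
  proof -
    define Bad where "Bad = {y. ball_class y \<sigma> \<notin> Sset J1 J2}"
    let ?F = "Fset \<sigma> \<tau>"
    have finF: "finite ?F" by (rule finite_Fset[OF fin])
    have BadF: "Bad \<subseteq> ?F"
    proof
      fix y assume y: "y \<in> Bad"
      show "y \<in> ?F"
      proof (rule ccontr)
        assume "y \<notin> ?F"
        then have "\<forall>u\<in>ball1 y. \<sigma> u = \<tau> u" by (simp add: Fset_def)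
        then have "ball_class y \<sigma> = ball_class y \<tau>" by (rule class_local)
        then show False using y GS_class[OF t, of y] by (simp add: Bad_def)
      qed
    qed
    have finBad: "finite Bad" using finite_subset[OF BadF finF] .
    have tc: "is_config \<tau>" using t by (simp add: GS_def ground_state_def)
    have et: "eloc J1 J2 \<tau> x = Umin J1 J2" for x
      using t by (simp add: GS_def ground_state_def ball_energy_eq[symmetric])
    have es: "eloc J1 J2 \<sigma> x = Uval J1 J2 (ball_class x \<sigma>)" for x
      by (rule eloc_class[OF c])
    have nonneg: "0 \<le> Uval J1 J2 (ball_class x \<sigma>) - Umin J1 J2" for x
      using Uval_ge[OF class_range[of x \<sigma>]] by simp
    have "relH J1 J2 \<sigma> \<tau> = (\<Sum>x\<in>?F. Uval J1 J2 (ball_class x \<sigma>) - Umin J1 J2)"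
      by (simp add: relH_eq[OF fin] et es)
    also have "\<dots> \<ge> (\<Sum>x\<in>Bad. Uval J1 J2 (ball_class x \<sigma>) - Umin J1 J2)"
      by (rule sum_mono2[OF finF BadF nonneg])
    moreover have "(\<Sum>x\<in>Bad. Uval J1 J2 (ball_class x \<sigma>) - Umin J1 J2) \<ge> (\<Sum>x\<in>Bad. \<delta>)"
    proof (rule sum_mono)
      fix x assume "x \<in> Bad"
      then have "ball_class x \<sigma> \<in> Bd" using class_range[of x \<sigma>] by (simp add: Bad_def Bd_def)
      then show "\<delta> \<le> Uval J1 J2 (ball_class x \<sigma>) - Umin J1 J2" by (rule dle)
    qed
    ultimately have rel: "relH J1 J2 \<sigma> \<tau> \<ge> \<delta> * real (card Bad)"
      by (simp add: mult.commute)
    define R where "R y = (\<lambda>w. Abs_G2 (red_app (Rep_G2 y) w)) ` L3" for y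
    have bsub: "boundary J1 J2 \<sigma> \<subseteq> (\<Union>y\<in>Bad. R y)"
    proof
      fix z assume "z \<in> boundary J1 J2 \<sigma>"
      then obtain x where x: "improper J1 J2 \<sigma> x" "z \<in> ball2 x"
        unfolding boundary_def by blast
      have "\<not> (\<forall>y\<in>ball1 x. ball_class y \<sigma> \<in> Sset J1 J2)"
        using proper_ball[OF S c] x(1) by blast
      then obtain y where y: "y \<in> ball1 x" "y \<in> Bad" by (auto simp: Bad_def)
      have "x \<in> ball1 y" using y(1) ball1_sym by blast
      then have "gdist y x \<le> 1" by (simp add: ball1_def)
      then obtain w1 where w1: "set w1 \<subseteq> {0,1,2}" "length w1 \<le> 1" "Rep_G2 x = red_app (Rep_G2 y) w1"
        using gdist_le_word by blast
      have "gdist x z \<le> 2" using x(2) by (simp add: ball2_def)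
      then obtain w2 where w2: "set w2 \<subseteq> {0,1,2}" "length w2 \<le> 2" "Rep_G2 z = red_app (Rep_G2 x) w2"
        using gdist_le_word by blast
      have "Rep_G2 z = red_app (Rep_G2 y) (w1 @ w2)" using w1 w2 by (simp add: red_app_append)
      then have "z = Abs_G2 (red_app (Rep_G2 y) (w1 @ w2))" by (metis Rep_G2_inverse)
      moreover have "w1 @ w2 \<in> L3" using w1 w2 by (simp add: L3_def)
      ultimately have "z \<in> R y" by (simp add: R_def)
      then show "z \<in> (\<Union>y\<in>Bad. R y)" using y(2) by blast
    qed
    have cardR: "card (R y) \<le> K" for y unfolding R_def K_def by (rule card_image_le[OF finL3])
    have finR: "finite (R y)" for y unfolding R_def using finL3 by simp
    have finU: "finite (\<Union>y\<in>Bad. R y)" using finBad finR by blast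
    have finB: "finite (boundary J1 J2 \<sigma>)" using finite_subset[OF bsub finU] .
    have "boundary_size J1 J2 \<sigma> \<le> card (boundary J1 J2 \<sigma>)"
    proof -
      have "{z. ball1 z \<subseteq> boundary J1 J2 \<sigma>} \<subseteq> boundary J1 J2 \<sigma>" using self_in_ball1 by blast
      then show ?thesis unfolding boundary_size_def by (rule card_mono[OF finB])
    qed
    also have "\<dots> \<le> card (\<Union>y\<in>Bad. R y)" by (rule card_mono[OF finU bsub])
    also have "\<dots> \<le> (\<Sum>y\<in>Bad. card (R y))" by (rule card_UN_le[OF finBad])
    also have "\<dots> \<le> (\<Sum>y\<in>Bad. K)" by (rule sum_mono) (rule cardR)
    also have "\<dots> = K * card Bad" by simp
    finally have bs: "real (boundary_size J1 J2 \<sigma>) \<le> real K * real (card Bad)"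
      by (metis of_nat_le_iff of_nat_mult)
    have "lam * real (boundary_size J1 J2 \<sigma>) \<le> lam * (real K * real (card Bad))"
      using bs lampos by (simp add: mult_left_mono)
    also have "\<dots> = \<delta> * real (card Bad)" unfolding lam_def using Kpos by simp
    finally show ?thesis using rel by simp
  qed
  show ?thesis using lampos main by blast
qed


lemma ball1_Rep: "u \<in> ball1 x \<longleftrightarrow> Rep_G2 u = Rep_G2 x \<or> Rep_G2 u = step (Rep_G2 x) 0
   \<or> Rep_G2 u = step (Rep_G2 x) 1 \<or> Rep_G2 u = step (Rep_G2 x) 2"
proof -
  have "u \<in> ball1 x \<longleftrightarrow> u = x \<or> u = nb x 0 \<or> u = nb x 1 \<or> u = nb x 2"
    unfolding ball1_eq lessThan3 by auto
  also have "\<dots> \<longleftrightarrow> Rep_G2 u = Rep_G2 x \<or> Rep_G2 u = Rep_G2 (nb x 0)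
     \<or> Rep_G2 u = Rep_G2 (nb x 1) \<or> Rep_G2 u = Rep_G2 (nb x 2)"
    by (simp add: Rep_G2_inject)
  finally show ?thesis by (simp add: Rep_nb)
qed

lemma ball1_one: "u \<in> ball1 g2_one \<longleftrightarrow> Rep_G2 u = [] \<or> Rep_G2 u = [0] \<or> Rep_G2 u = [1] \<or> Rep_G2 u = [2]"
  unfolding ball1_Rep by (simp add: Rep_one step_def)

lemma ball1_gen0: "u \<in> ball1 (gen 0) \<longleftrightarrow> Rep_G2 u = [0] \<or> Rep_G2 u = [] \<or> Rep_G2 u = [0,1] \<or> Rep_G2 u = [0,2]"
  unfolding ball1_Rep by (simp add: Rep_gen step_def)

definition fA :: "int \<Rightarrow> G2 \<Rightarrow> int" where
  "fA a u = (if Rep_G2 u = [] then 1 else if Rep_G2 u = [0] then a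
             else if Rep_G2 u = [1] then 1 else if Rep_G2 u = [2] then -1 else 0)"

definition gA :: "int \<Rightarrow> int \<Rightarrow> G2 \<Rightarrow> int" where
  "gA a s u = (if Rep_G2 u = [0] then a else if Rep_G2 u = [] then 1
             else if Rep_G2 u = [0,1] then s else if Rep_G2 u = [0,2] then -s else 0)"

lemma fA_confs: "a \<in> {-1,1} \<Longrightarrow> fA a \<in> confs_on (ball1 g2_one)"
  unfolding confs_on_def fA_def by (auto simp: ball1_one)

lemma gA_confs: "a \<in> {-1,1} \<Longrightarrow> s \<in> {-1,1} \<Longrightarrow> gA a s \<in> confs_on (ball1 (gen 0))"
  unfolding confs_on_def gA_def by (auto simp: ball1_gen0)

lemma Rep_nb_one: "i < 3 \<Longrightarrow> Rep_G2 (nb g2_one i) = [i]"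
  by (simp add: Rep_nb Rep_one step_def)

lemma Rep_nb_gen0: "Rep_G2 (nb (gen 0) 0) = []" "Rep_G2 (nb (gen 0) 1) = [0,1]"
  "Rep_G2 (nb (gen 0) 2) = [0,2]"
  by (simp_all add: Rep_nb Rep_gen step_def)

lemma class_fA: "a \<in> {-1,1} \<Longrightarrow> ball_class g2_one (fA a) = (if a = 1 then 2 else 4)"
  unfolding ball_class_def same_leaves_eq card3
  by (auto simp: fA_def Rep_nb_one Rep_one)

lemma class_gA: "a \<in> {-1,1} \<Longrightarrow> s \<in> {-1,1} \<Longrightarrow> ball_class (gen 0) (gA a s) = (if a = 1 then 2 else 4)"
  unfolding ball_class_def same_leaves_eq card3
  by (auto simp: gA_def Rep_nb Rep_gen step_def)

lemma nbr_one_gen0: "nbr_balls (ball1 g2_one) (ball1 (gen 0))"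
proof -
  have "gen 1 \<in> ball1 g2_one" "gen 1 \<notin> ball1 (gen 0)"
    by (simp_all add: ball1_one ball1_gen0 Rep_gen)
  then have "ball1 g2_one \<noteq> ball1 (gen 0)" by blast
  moreover have "g2_one \<in> ball1 g2_one" "gen 0 \<in> ball1 g2_one" "g2_one \<in> ball1 (gen 0)" "gen 0 \<in> ball1 (gen 0)"
    by (simp_all add: ball1_one ball1_gen0 Rep_gen Rep_one)
  moreover have "adj g2_one (gen 0)" unfolding adj_def by (rule exI[of _ 0]) simp
  ultimately show ?thesis unfolding nbr_balls_def by blast
qed

lemma compat_fg: "compatible (ball1 g2_one) (ball1 (gen 0)) (fA a) (gA a s)"
proof -
  have "fA a u = gA a s u" if "u \<in> ball1 g2_one" "u \<in> ball1 (gen 0)" for u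
    using that unfolding ball1_one ball1_gen0 fA_def gA_def by auto
  then show ?thesis unfolding compatible_def by blast
qed

lemma gA_neq: "gA a 1 \<noteq> gA a (-1)"
proof
  assume "gA a 1 = gA a (-1)"
  then have "gA a 1 (nb (gen 0) 1) = gA a (-1) (nb (gen 0) 1)" by simp
  then show False by (simp add: gA_def Rep_nb Rep_gen step_def)
qed

lemma S_sub:
  assumes H: "\<forall>x. \<forall>f \<in> confs_on (ball1 x). ball_class x f \<in> Sset J1 J2 \<longrightarrow>
             (\<forall>y. nbr_balls (ball1 x) (ball1 y) \<longrightarrow>
                (\<exists>!g. g \<in> confs_on (ball1 y) \<and> ball_class y g \<in> Sset J1 J2 \<and>
                      compatible (ball1 x) (ball1 y) f g))"
  shows "Sset J1 J2 \<subseteq> {1,3}"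
proof -
  have no: "(if a = 1 then 2 else 4) \<notin> Sset J1 J2" if a: "a \<in> {-1,1}" for a :: int
  proof
    assume m: "(if a = 1 then 2 else 4) \<in> Sset J1 J2"
    have "ball_class g2_one (fA a) \<in> Sset J1 J2" using m class_fA[OF a] by simp
    then have "\<exists>!g. g \<in> confs_on (ball1 (gen 0)) \<and> ball_class (gen 0) g \<in> Sset J1 J2 \<and>
                      compatible (ball1 g2_one) (ball1 (gen 0)) (fA a) g"
      using H fA_confs[OF a] nbr_one_gen0 by blast
    moreover have "gA a s \<in> confs_on (ball1 (gen 0)) \<and> ball_class (gen 0) (gA a s) \<in> Sset J1 J2 \<and>
                      compatible (ball1 g2_one) (ball1 (gen 0)) (fA a) (gA a s)" if s: "s \<in> {-1,1}" for s
      using gA_confs[OF a s] class_gA[OF a s] m compat_fg by simp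
    ultimately have "gA a 1 = gA a (-1)" by (metis insertI1 insertI2 singletonI)
    then show False using gA_neq by blast
  qed
  have "2 \<notin> Sset J1 J2" using no[of 1] by simp
  moreover have "4 \<notin> Sset J1 J2" using no[of "-1"] by simp
  moreover have "Sset J1 J2 \<subseteq> {1,2,3,4}" by (auto simp: Sset_def)
  ultimately show ?thesis by blast
qed

theorem theorem6p3:
  fixes J1 J2 :: real
  assumes "\<forall>x. \<forall>f \<in> confs_on (ball1 x). ball_class x f \<in> Sset J1 J2 \<longrightarrow>
             (\<forall>y. nbr_balls (ball1 x) (ball1 y) \<longrightarrow>
                (\<exists>!g. g \<in> confs_on (ball1 y) \<and> ball_class y g \<in> Sset J1 J2 \<and>
                      compatible (ball1 x) (ball1 y) f g))"
  shows "peierls J1 J2"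
proof -
  have S: "Sset J1 J2 \<subseteq> {1,3}" by (rule S_sub[OF assms])
  show ?thesis unfolding peierls_def
    using GS_finite[OF S] GS_period[OF S] peierls_bound[OF S] by blast
qed

end
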